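(* Let $G \subset \mathrm{Diff}^1_+(\mathbb{S}^2)$ be a group with $\mathrm{M\ddot{o}b}(\mathbb{S}^2)\subsetneq G$. Then there exist $0<\lambda<1$ and a family $(g_t)_{t\in[0,1]}$ with $g_t\in G_2$ for all $t$, $g_0=\mathrm{id}$, and $t\mapsto g_t$ continuous in the $C^1$ topology, such that: (1) for every $t>0$, $Dg_t(\mathbf{0})$ is a hyperbolic saddle (real eigenvalues $\mu_t,\mu_t^{-1}$ with $0<\mu_t<1$) whose stable (contracting) direction is the tangent line $T_{\mathbf{0}}\Gamma$; (2) $Dg_1(\mathbf{0})=\mathrm{diag}(\lambda,\lambda^{-1})$ with respect to the canonical basis of $T_{\mathbf{0}}\mathbb{S}^2$.
   Context: $\mathbb{S}^2$ is identified with $\mathbb{C}\cup\{\infty\}$ by stereographic projection from the North Pole $\mathbf{\infty}$; $\mathbf{0}$ is the South Pole (origin), $\mathbf{1}$ is the point corresponding to $1\in\mathbb{R}$, and $\Gamma$ is the meridian through $\mathbf{0},\mathbf{1},\mathbf{\infty}$, i.e. the image of $\mathbb{R}\cup\{\infty\}$; $T_{\mathbf{0}}\Gamma$ corresponds to the $x$-axis, spanned by $\partial/\partial x$, in $T_{\mathbf{0}}\mathbb{S}^2\cong\mathbb{R}^2$. $\mathrm{Diff}^1_+(\mathbb{S}^2)$ is the group of orientation-preserving $C^1$ diffeomorphisms; $\mathrm{M\ddot{o}b}(\mathbb{S}^2)$ is the group of maps $z\mapsto (az+b)/(cz+d)$, $ad-bc=1$. $G_2=\{g\in G: g(\mathbf{0})=\mathbf{0},\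 g(\mathbf{\infty})=\mathbf{\infty}\}$. *)

theory Defs
  imports "HOL-Analysis.Analysis"
begin

text \<open>The sphere S^2 is modelled as the Riemann sphere C \<union> {\<infinity>} = complex option,
  with None the North Pole \<infinity> and Some 0 the South Pole.\<close>

type_synonym sphere = "complex option"

fun chart :: "bool \<Rightarrow> sphere \<Rightarrow> complex" where
  "chart True (Some z) = z"
| "chart True None = 0"
| "chart False (Some z) = 1 / z"
| "chart False None = 0"

fun cdom :: "bool \<Rightarrow> sphere set" where
  "cdom True = range Some"
| "cdom False = insert None (Some ` (- {0}))"

fun cinv :: "bool \<Rightarrow> complex \<Rightarrow> sphere" where
  "cinv True w = Some w"
| "cinv False w = (if w = 0 then None else Some (1 / w))"

definition locrep :: "bool \<Rightarrow> bool \<Rightarrow> (sphere \<Rightarrow> sphere) \<Rightarrow> complex \<Rightarrow> complex" where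
  "locrep a b g = (\<lambda>w. chart b (g (cinv a w)))"

definition repdom :: "bool \<Rightarrow> bool \<Rightarrow> (sphere \<Rightarrow> sphere) \<Rightarrow> complex set" where
  "repdom a b g = {w. g (cinv a w) \<in> cdom b}"

definition C1_map :: "(sphere \<Rightarrow> sphere) \<Rightarrow> bool" where
  "C1_map g \<longleftrightarrow> (\<forall>a b. open (repdom a b g)
      \<and> (\<forall>w\<in>repdom a b g. locrep a b g differentiable (at w))
      \<and> (\<forall>v\<in>{1, \<i>}. continuous_on (repdom a b g)
            (\<lambda>w. frechet_derivative (locrep a b g) (at w) v)))"

definition jdet :: "(complex \<Rightarrow> complex) \<Rightarrow> real" where
  "jdet L = Re (L 1) * Im (L \<i>) - Im (L 1) * Re (L \<i>)"

definition Diff1_plus :: "(sphere \<Rightarrow> sphere) set" where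
  "Diff1_plus = {g. bij g \<and> C1_map g \<and> C1_map (inv g)
      \<and> (\<forall>a b. \<forall>w\<in>repdom a b g. jdet (frechet_derivative (locrep a b g) (at w)) > 0)}"

fun mobius :: "complex \<Rightarrow> complex \<Rightarrow> complex \<Rightarrow> complex \<Rightarrow> sphere \<Rightarrow> sphere" where
  "mobius a b c d None = (if c = 0 then None else Some (a / c))"
| "mobius a b c d (Some z) =
     (if c * z + d = 0 then None else Some ((a * z + b) / (c * z + d)))"

definition Mob :: "(sphere \<Rightarrow> sphere) set" where
  "Mob = {mobius a b c d | a b c d. a * d - b * c = 1}"

definition is_group_of_maps :: "(sphere \<Rightarrow> sphere) set \<Rightarrow> bool" where
  "is_group_of_maps G \<longleftrightarrow> id \<in> G \<and> (\<forall>f\<in>G. \<forall>g\<in>G. f \<circ> g \<in> G) \<and> (\<forall>g\<in>G. inv g \<in> G)"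

definition G2 :: "(sphere \<Rightarrow> sphere) set \<Rightarrow> (sphere \<Rightarrow> sphere) set" where
  "G2 G = {g \<in> G. g (Some 0) = Some 0 \<and> g None = None}"

text \<open>Continuity of a family of maps in the (compact-open) C^1 topology: uniform convergence
  of local representatives and their partial derivatives on compact subsets of chart domains.\<close>
definition C1_continuous_on :: "real set \<Rightarrow> (real \<Rightarrow> sphere \<Rightarrow> sphere) \<Rightarrow> bool" where
  "C1_continuous_on S g \<longleftrightarrow> (\<forall>t0\<in>S. \<forall>a b K. compact K \<and> K \<subseteq> repdom a b (g t0) \<longrightarrow>
      (\<forall>\<^sub>F t in at t0 within S. K \<subseteq> repdom a b (g t))
      \<and> uniform_limit K (\<lambda>t. locrep a b (g t)) (locrep a b (g t0)) (at t0 within S)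
      \<and> (\<forall>v\<in>{1, \<i>}. uniform_limit K
            (\<lambda>t w. frechet_derivative (locrep a b (g t)) (at w) v)
            (\<lambda>w. frechet_derivative (locrep a b (g t0)) (at w) v) (at t0 within S)))"

text \<open>Derivative at the South Pole 0, in the chart z (canonical basis 1 = d/dx, i = d/dy).\<close>
definition D0 :: "(sphere \<Rightarrow> sphere) \<Rightarrow> complex \<Rightarrow> complex" where
  "D0 g = frechet_derivative (locrep True True g) (at 0)"

end

theory Submission
  imports Defs "HOL-Complex_Analysis.Complex_Analysis"
begin


definition mulmap :: "complex \<Rightarrow> sphere \<Rightarrow> sphere" where
  "mulmap c = map_option (\<lambda>z. c * z)"

definition transl :: "complex \<Rightarrow> sphere \<Rightarrow> sphere" where
  "transl c = map_option (\<lambda>z. z + c)"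

lemma mulmap_simps[simp]: "mulmap c None = None" "mulmap c (Some z) = Some (c * z)"
  by (auto simp: mulmap_def)

lemma transl_simps[simp]: "transl c None = None" "transl c (Some z) = Some (z + c)"
  by (auto simp: transl_def)

lemma mobI: "a * d - b * c = 1 \<Longrightarrow> mobius a b c d \<in> Mob"
  unfolding Mob_def by blast

lemma mulmap_Mob: assumes "c \<noteq> 0" shows "mulmap c \<in> Mob"
proof -
  have s: "csqrt c \<noteq> 0" using assms by simp
  have "mulmap c = mobius (csqrt c) 0 0 (1 / csqrt c)"
  proof
    fix x show "mulmap c x = mobius (csqrt c) 0 0 (1 / csqrt c) x"
      using s by (cases x) (auto simp: power2_eq_square[symmetric])
  qed
  moreover have "csqrt c * (1 / csqrt c) - 0 * 0 = 1" using s by simp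
  ultimately show ?thesis using mobI by metis
qed

lemma transl_Mob: "transl c \<in> Mob"
proof -
  have "transl c = mobius 1 c 0 1"
  proof
    fix x show "transl c x = mobius 1 c 0 1 x" by (cases x) auto
  qed
  then show ?thesis using mobI[of 1 1 c 0] by simp
qed

lemma mulmap_1[simp]: "mulmap 1 = id"
  by (auto simp: mulmap_def fun_eq_iff option.map_id0 option.map_ident)

definition good :: "(sphere \<Rightarrow> sphere) \<Rightarrow> bool" where
  "good k \<longleftrightarrow> bij k \<and> k None = None \<and> k (Some 0) = Some 0"

lemma good_None_iff: "good k \<Longrightarrow> k x = None \<longleftrightarrow> x = None"
  unfolding good_def by (metis bij_def injD)

lemma good_Some0_iff: "good k \<Longrightarrow> k x = Some 0 \<longleftrightarrow> x = Some 0"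
  unfolding good_def by (metis bij_def injD)

lemma good_inv: "good k \<Longrightarrow> good (inv k)"
  unfolding good_def by (metis bij_imp_bij_inv bij_def inv_f_eq)

lemma good_comp: "good k \<Longrightarrow> good l \<Longrightarrow> good (k \<circ> l)"
  unfolding good_def by (auto intro: bij_comp)

lemma good_mulmap: "c \<noteq> 0 \<Longrightarrow> good (mulmap c)"
proof -
  assume c: "c \<noteq> 0"
  have "bij (mulmap c)"
  proof (rule bij_betw_byWitness[where f' = "mulmap (1/c)"])
    show "\<forall>a\<in>UNIV. mulmap (1 / c) (mulmap c a) = a"
      using c by (auto simp: mulmap_def option.map_comp o_def option.map_ident)
    show "\<forall>a'\<in>UNIV. mulmap c (mulmap (1 / c) a') = a'"
      using c by (auto simp: mulmap_def option.map_comp o_def option.map_ident)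
  qed auto
  then show ?thesis by (simp add: good_def)
qed

definition RD :: "bool \<Rightarrow> bool \<Rightarrow> complex set" where
  "RD a b = (if a = b then UNIV else - {0})"

lemma good_cdom: "good k \<Longrightarrow> k (cinv a w) \<in> cdom a"
proof -
  assume g: "good k"
  show ?thesis
  proof (cases a)
    case True
    then show ?thesis using good_None_iff[OF g, of "Some w"] by auto
  next
    case False
    show ?thesis
    proof (cases "w = 0")
      case True
      then show ?thesis using g False by (simp add: good_def)
    next
      case w: False
      have "k (Some (1/w)) \<noteq> None" using good_None_iff[OF g] by simp
      moreover have "k (Some (1/w)) \<noteq> Some 0" using good_Some0_iff[OF g] w by simp
      ultimately show ?thesis using False w by (cases "k (Some (1/w))") auto
    qed
  qed
qed

lemma cdom_False_iff: "x \<in> cdom False \<longleftrightarrow> x \<noteq> Some 0"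
  by (cases x) auto

lemma cdom_True_iff: "x \<in> cdom True \<longleftrightarrow> x \<noteq> None"
  by (cases x) auto

lemma good_repdom: "good k \<Longrightarrow> repdom a b k = RD a b"
proof -
  assume g: "good k"
  show ?thesis
  proof (cases "a = b")
    case True
    then show ?thesis using good_cdom[OF g] unfolding repdom_def RD_def by simp
  next
    case False
    show ?thesis
    proof (cases a)
      case True
      with False have b: "b = False" by auto
      have "k (Some w) \<in> cdom False \<longleftrightarrow> w \<noteq> 0" for w
        unfolding cdom_False_iff using good_Some0_iff[OF g, of "Some w"] by simp
      then show ?thesis using True b unfolding repdom_def RD_def by auto
    next
      case a: False
      with False have b: "b = True" by auto
      have "k (cinv False w) \<in> cdom True \<longleftrightarrow> w \<noteq> 0" for w
        unfolding cdom_True_iff using good_None_iff[OF g, of "cinv False w"] by simp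
      then show ?thesis using a b unfolding repdom_def RD_def by auto
    qed
  qed
qed


definition sc :: "bool \<Rightarrow> complex \<Rightarrow> complex" where
  "sc b c = (if b then c else inverse c)"

lemma sc_nz: "c \<noteq> 0 \<Longrightarrow> sc b c \<noteq> 0" by (simp add: sc_def)

lemma chart_mulmap: "c \<noteq> 0 \<Longrightarrow> chart b (mulmap c y) = sc b c * chart b y"
  by (cases b; cases y) (auto simp: sc_def field_simps)

lemma cinv_mulmap: "c \<noteq> 0 \<Longrightarrow> x \<in> cdom a \<Longrightarrow> cinv a (sc a c * chart a x) = mulmap c x"
  by (cases a; cases x) (auto simp: sc_def field_simps)

lemma locrep_path:
  assumes "good h" "\<gamma> \<noteq> 0" "\<rho> \<noteq> 0"
  shows "locrep a b (mulmap \<gamma> \<circ> inv h \<circ> mulmap \<rho> \<circ> h) w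
       = sc b \<gamma> * locrep a b (inv h) (sc a \<rho> * locrep a a h w)"
proof -
  have x: "h (cinv a w) \<in> cdom a" using good_cdom[OF assms(1)] .
  show ?thesis unfolding locrep_def o_def
    using cinv_mulmap[OF assms(3) x] chart_mulmap[OF assms(2)] by simp
qed

lemma locrep_aa_nz: assumes "good h" "w \<noteq> 0" shows "locrep a a h w \<noteq> 0"
proof (cases a)
  case True
  have "h (Some w) \<noteq> None" "h (Some w) \<noteq> Some 0"
    using good_None_iff[OF assms(1)] good_Some0_iff[OF assms(1)] assms(2) by auto
  then show ?thesis using True by (cases "h (Some w)") (auto simp: locrep_def)
next
  case False
  have "h (Some (1/w)) \<noteq> None" "h (Some (1/w)) \<noteq> Some 0"
    using good_None_iff[OF assms(1)] good_Some0_iff[OF assms(1)] assms(2) by auto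
  then show ?thesis using False assms(2) by (cases "h (Some (1/w))") (auto simp: locrep_def)
qed

lemma RD_inner: assumes "good h" "w \<in> RD a b" "c \<noteq> 0"
  shows "sc a c * locrep a a h w \<in> RD a b"
  using assms locrep_aa_nz[OF assms(1)] sc_nz[OF assms(3)] by (auto simp: RD_def)

lemma lin_decomp:
  assumes "linear L"
  shows "L x = of_real (Re x) * L 1 + of_real (Im x) * L \<i>"
proof -
  have "x = Re x *\<^sub>R 1 + Im x *\<^sub>R \<i>" by (simp add: complex_eq_iff)
  then have "L x = L (Re x *\<^sub>R 1 + Im x *\<^sub>R \<i>)" by simp
  also have "\<dots> = Re x *\<^sub>R L 1 + Im x *\<^sub>R L \<i>"
    using assms by (simp add: linear_add linear_scale)
  finally show ?thesis by (simp add: scaleR_conv_of_real)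
qed

lemma UL:
  fixes F :: "real \<Rightarrow> complex \<Rightarrow> complex"
  assumes "compact K" "continuous_on (S \<times> K) (\<lambda>p. F (fst p) (snd p))" "t0 \<in> S"
  shows "uniform_limit K F (F t0) (at t0 within S)"
  unfolding uniform_limit_iff
proof (intro allI impI)
  fix e :: real assume e: "e > 0"
  have c: "continuous_on (S \<times> K) (\<lambda>p. case p of (t, w) \<Rightarrow> F t w)"
    using assms(2) by (simp add: case_prod_beta)
  obtain X0 where X0: "t0 \<in> X0" "open X0"
    "\<forall>x\<in>X0 \<inter> S. \<forall>t\<in>K. dist ((\<lambda>(t, w). F t w) (x, t)) ((\<lambda>(t, w). F t w) (t0, t)) \<le> e/2"
    using continuous_on_prod_compactE[OF c assms(1) assms(3), of "e/2"] e by auto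
  show "\<forall>\<^sub>F n in at t0 within S. \<forall>x\<in>K. dist (F n x) (F t0 x) < e"
    unfolding eventually_at_topological
  proof (intro exI[of _ X0] conjI ballI impI)
    fix x w assume "x \<in> X0" "x \<in> S" "w \<in> K"
    then have "dist (F x w) (F t0 w) \<le> e/2" using X0(3) by auto
    then show "dist (F x w) (F t0 w) < e" using e by simp
  qed (use X0 in auto)
qed



lemma UL_cong:
  assumes "uniform_limit K g (g t0) F" "\<And>t w. w \<in> K \<Longrightarrow> f t w = g t w"
  shows "uniform_limit K f (f t0) F"
  using assms unfolding uniform_limit_iff by simp

lemma sc_cont: assumes "continuous_on UNIV \<gamma>" "\<And>t. \<gamma> t \<noteq> 0"
  shows "continuous_on UNIV (\<lambda>t. sc b (\<gamma> t))"
  using assms unfolding sc_def by (cases b) (auto intro!: continuous_intros)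

lemma Diff1_plus_C1:
  assumes "h \<in> Diff1_plus"
  shows "open (repdom a b h)" "\<And>w. w \<in> repdom a b h \<Longrightarrow> locrep a b h differentiable (at w)"
    "\<And>v. v \<in> {1, \<i>} \<Longrightarrow> continuous_on (repdom a b h) (\<lambda>w. frechet_derivative (locrep a b h) (at w) v)"
  using assms unfolding Diff1_plus_def C1_map_def by auto

lemma path_C1:
  fixes \<gamma> \<rho> :: "real \<Rightarrow> complex"
  assumes hD: "h \<in> Diff1_plus" and ihD: "inv h \<in> Diff1_plus" and g: "good h"
    and cg: "continuous_on UNIV \<gamma>" and cr: "continuous_on UNIV \<rho>"
    and nzg: "\<And>t. \<gamma> t \<noteq> 0" and nzr: "\<And>t. \<rho> t \<noteq> 0"
  shows "C1_continuous_on S (\<lambda>t. mulmap (\<gamma> t) \<circ> inv h \<circ> mulmap (\<rho> t) \<circ> h)"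
  unfolding C1_continuous_on_def
proof (intro ballI allI impI conjI)
  fix t0 a b K
  assume t0: "t0 \<in> S" and KK: "compact K \<and> K \<subseteq> repdom a b (mulmap (\<gamma> t0) \<circ> inv h \<circ> mulmap (\<rho> t0) \<circ> h)"
  have gi: "good (inv h)" using good_inv[OF g] .
  have gt: "good (mulmap (\<gamma> t) \<circ> inv h \<circ> mulmap (\<rho> t) \<circ> h)" for t
    using good_comp good_mulmap gi g nzg nzr by metis
  have rd: "repdom a b (mulmap (\<gamma> t) \<circ> inv h \<circ> mulmap (\<rho> t) \<circ> h) = RD a b" for t
    using good_repdom[OF gt] .
  have K: "compact K" "K \<subseteq> RD a b" using KK rd by auto
  define P where "P = locrep a b (inv h)"
  define Q where "Q = locrep a a h"
  have rdP: "repdom a b (inv h) = RD a b" using good_repdom[OF gi] .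
  have rdQ: "repdom a a h = UNIV" using good_repdom[OF g] by (simp add: RD_def)
  have oRD: "open (RD a b)" using Diff1_plus_C1(1)[OF ihD, of a b] rdP by simp
  have dP: "\<And>z. z \<in> RD a b \<Longrightarrow> P differentiable (at z)"
    using Diff1_plus_C1(2)[OF ihD, of _ a b] rdP P_def by simp
  have dQ: "\<And>w. Q differentiable (at w)"
    using Diff1_plus_C1(2)[OF hD, of _ a a] rdQ Q_def by simp
  have cdP: "\<And>v. v \<in> {1, \<i>} \<Longrightarrow> continuous_on (RD a b) (\<lambda>z. frechet_derivative P (at z) v)"
    using Diff1_plus_C1(3)[OF ihD, of _ a b] rdP P_def by simp
  have cdQ: "\<And>v. v \<in> {1, \<i>} \<Longrightarrow> continuous_on UNIV (\<lambda>w. frechet_derivative Q (at w) v)"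
    using Diff1_plus_C1(3)[OF hD, of _ a a] rdQ Q_def by simp
  have cP: "continuous_on (RD a b) P"
    using dP by (meson continuous_at_imp_continuous_on differentiable_imp_continuous_within)
  have cQ: "continuous_on UNIV Q"
    using dQ by (meson continuous_at_imp_continuous_on differentiable_imp_continuous_within)
  define inner where "inner t w = sc a (\<rho> t) * Q w" for t w
  define \<Phi> where "\<Phi> t w = sc b (\<gamma> t) * P (inner t w)" for t w
  have loc: "locrep a b (mulmap (\<gamma> t) \<circ> inv h \<circ> mulmap (\<rho> t) \<circ> h) = \<Phi> t" for t
    unfolding \<Phi>_def inner_def P_def Q_def
    using locrep_path[OF g nzg nzr] by auto
  have inRD: "w \<in> RD a b \<Longrightarrow> inner t w \<in> RD a b" for t w
    unfolding inner_def Q_def using RD_inner[OF g _ nzr] by blast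
  have csa: "continuous_on (S \<times> K) (\<lambda>p. sc a (\<rho> (fst p)))"
    by (rule continuous_on_compose2[OF sc_cont[OF cr nzr]]) (auto intro!: continuous_intros)
  have csb: "continuous_on (S \<times> K) (\<lambda>p. sc b (\<gamma> (fst p)))"
    by (rule continuous_on_compose2[OF sc_cont[OF cg nzg]]) (auto intro!: continuous_intros)
  have cQp: "continuous_on (S \<times> K) (\<lambda>p. Q (snd p))"
    by (rule continuous_on_compose2[OF cQ]) (auto intro!: continuous_intros)
  have cinner: "continuous_on (S \<times> K) (\<lambda>p. inner (fst p) (snd p))"
    unfolding inner_def by (rule continuous_on_mult[OF csa cQp])
  have inRD': "p \<in> S \<times> K \<Longrightarrow> inner (fst p) (snd p) \<in> RD a b" for p
    using inRD K(2) by auto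
  have cPi: "continuous_on (S \<times> K) (\<lambda>p. P (inner (fst p) (snd p)))"
    by (rule continuous_on_compose2[OF cP cinner]) (use inRD' in auto)
  have cPhi: "continuous_on (S \<times> K) (\<lambda>p. \<Phi> (fst p) (snd p))"
    unfolding \<Phi>_def by (rule continuous_on_mult[OF csb cPi])
  show "\<forall>\<^sub>F t in at t0 within S. K \<subseteq> repdom a b (mulmap (\<gamma> t) \<circ> inv h \<circ> mulmap (\<rho> t) \<circ> h)"
    using K rd by simp
  show "uniform_limit K (\<lambda>t. locrep a b (mulmap (\<gamma> t) \<circ> inv h \<circ> mulmap (\<rho> t) \<circ> h))
        (locrep a b (mulmap (\<gamma> t0) \<circ> inv h \<circ> mulmap (\<rho> t0) \<circ> h)) (at t0 within S)"
    unfolding loc using UL[OF K(1) cPhi t0] .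
  show "uniform_limit K
            (\<lambda>t w. frechet_derivative (locrep a b (mulmap (\<gamma> t) \<circ> inv h \<circ> mulmap (\<rho> t) \<circ> h)) (at w) v)
            (\<lambda>w. frechet_derivative (locrep a b (mulmap (\<gamma> t0) \<circ> inv h \<circ> mulmap (\<rho> t0) \<circ> h)) (at w) v)
            (at t0 within S)" if v: "v \<in> {1, \<i>}" for v
  proof -
    define DP where "DP z = frechet_derivative P (at z)" for z
    define DQ where "DQ w = frechet_derivative Q (at w)" for w
    define X where "X t w = sc a (\<rho> t) * (of_real (Re v) * DQ w 1 + of_real (Im v) * DQ w \<i>)" for t w
    define \<Psi> where "\<Psi> t w = sc b (\<gamma> t) * (of_real (Re (X t w)) * DP (inner t w) 1
                              + of_real (Im (X t w)) * DP (inner t w) \<i>)" for t w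
    have fd: "frechet_derivative (\<Phi> t) (at w) v = \<Psi> t w" if w: "w \<in> RD a b" for t w
    proof -
      have hQ: "(Q has_derivative DQ w) (at w)" unfolding DQ_def using dQ frechet_derivative_works by blast
      have hP: "(P has_derivative DP (inner t w)) (at (inner t w))"
        unfolding DP_def using dP[OF inRD[OF w]] frechet_derivative_works by blast
      have hI: "(inner t has_derivative (\<lambda>x. sc a (\<rho> t) * DQ w x)) (at w)"
        unfolding inner_def by (rule has_derivative_mult_right[OF hQ])
      have "(\<Phi> t has_derivative (\<lambda>x. sc b (\<gamma> t) * DP (inner t w) (sc a (\<rho> t) * DQ w x))) (at w)"
        unfolding \<Phi>_def
        by (rule has_derivative_mult_right[OF has_derivative_compose[OF hI hP]])
      then have "frechet_derivative (\<Phi> t) (at w) = (\<lambda>x. sc b (\<gamma> t) * DP (inner t w) (sc a (\<rho> t) * DQ w x))"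
        by (simp add: frechet_derivative_at[symmetric])
      moreover have "linear (DQ w)" using hQ has_derivative_bounded_linear bounded_linear.linear by blast
      moreover have "linear (DP (inner t w))" using hP has_derivative_bounded_linear bounded_linear.linear by blast
      ultimately show ?thesis
        unfolding \<Psi>_def X_def by (metis lin_decomp)
    qed
    have c1: "continuous_on (S \<times> K) (\<lambda>p. DQ (snd p) u)" if "u \<in> {1, \<i>}" for u
      unfolding DQ_def by (rule continuous_on_compose2[OF cdQ[OF that]]) (auto intro!: continuous_intros)
    have c2: "continuous_on (S \<times> K) (\<lambda>p. DP (inner (fst p) (snd p)) u)" if "u \<in> {1, \<i>}" for u
      unfolding DP_def by (rule continuous_on_compose2[OF cdP[OF that] cinner]) (use inRD' in auto)
    have cX: "continuous_on (S \<times> K) (\<lambda>p. X (fst p) (snd p))"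
      unfolding X_def using c1 by (intro continuous_intros csa) auto
    have cPsi: "continuous_on (S \<times> K) (\<lambda>p. \<Psi> (fst p) (snd p))"
      unfolding \<Psi>_def using c2 by (intro continuous_intros csb cX) auto
    show "uniform_limit K
            (\<lambda>t w. frechet_derivative (locrep a b (mulmap (\<gamma> t) \<circ> inv h \<circ> mulmap (\<rho> t) \<circ> h)) (at w) v)
            (\<lambda>w. frechet_derivative (locrep a b (mulmap (\<gamma> t0) \<circ> inv h \<circ> mulmap (\<rho> t0) \<circ> h)) (at w) v)
            (at t0 within S)"
      unfolding loc
      by (rule UL_cong[OF UL[OF K(1) cPsi t0]]) (use fd K(2) in auto)
  qed
qed



lemma good_locTT: "good h \<Longrightarrow> h (Some w) = Some (locrep True True h w)"
  using good_None_iff[of h "Some w"] by (cases "h (Some w)") (auto simp: locrep_def)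

lemma good_Q0: "good h \<Longrightarrow> locrep True True h 0 = 0"
  by (simp add: locrep_def good_def)

lemma good_d0: "h \<in> Diff1_plus \<Longrightarrow> good h \<Longrightarrow> (locrep True True h has_derivative D0 h) (at 0)"
proof -
  assume "h \<in> Diff1_plus" "good h"
  then have "locrep True True h differentiable (at 0)"
    using Diff1_plus_C1(2)[of h 0 True True] good_repdom[of h True True] by (simp add: RD_def)
  then show ?thesis unfolding D0_def using frechet_derivative_works by blast
qed

lemma D0_path:
  assumes hD: "h \<in> Diff1_plus" and ihD: "inv h \<in> Diff1_plus" and g: "good h"
    and nz: "\<gamma> \<noteq> 0" "\<rho> \<noteq> 0"
  shows "D0 (mulmap \<gamma> \<circ> inv h \<circ> mulmap \<rho> \<circ> h) v = \<gamma> * D0 (inv h) (\<rho> * D0 h v)"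
proof -
  have gi: "good (inv h)" using good_inv[OF g] .
  have loc: "locrep True True (mulmap \<gamma> \<circ> inv h \<circ> mulmap \<rho> \<circ> h)
     = (\<lambda>w. \<gamma> * locrep True True (inv h) (\<rho> * locrep True True h w))"
    using locrep_path[OF g nz, of True True] by (auto simp: sc_def)
  have hQ: "(locrep True True h has_derivative D0 h) (at 0)" using good_d0[OF hD g] .
  have hP: "(locrep True True (inv h) has_derivative D0 (inv h)) (at (\<rho> * locrep True True h 0))"
    using good_d0[OF ihD gi] good_Q0[OF g] by simp
  have "((\<lambda>w. \<gamma> * locrep True True (inv h) (\<rho> * locrep True True h w)) has_derivative
        (\<lambda>v. \<gamma> * D0 (inv h) (\<rho> * D0 h v))) (at 0)"
    by (rule has_derivative_mult_right[OF has_derivative_compose[OF has_derivative_mult_right[OF hQ] hP]])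
  then have "D0 (mulmap \<gamma> \<circ> inv h \<circ> mulmap \<rho> \<circ> h) = (\<lambda>v. \<gamma> * D0 (inv h) (\<rho> * D0 h v))"
    unfolding D0_def loc by (rule frechet_derivative_at[symmetric])
  then show ?thesis by simp
qed

lemma D0_inv:
  assumes hD: "h \<in> Diff1_plus" and ihD: "inv h \<in> Diff1_plus" and g: "good h"
  shows "D0 (inv h) (D0 h v) = v"
proof -
  have gi: "good (inv h)" using good_inv[OF g] .
  have "locrep True True (inv h) (locrep True True h w) = w" for w
  proof -
    have i: "inv h (h (Some w)) = Some w" using g by (simp add: good_def bij_def)
    obtain u where u: "h (Some w) = Some u" using good_locTT[OF g, of w] by blast
    show ?thesis using i by (simp add: locrep_def u)
  qed
  then have e: "(\<lambda>w. locrep True True (inv h) (locrep True True h w)) = (\<lambda>w. w)" by simp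
  have hQ: "(locrep True True h has_derivative D0 h) (at 0)" using good_d0[OF hD g] .
  have hP: "(locrep True True (inv h) has_derivative D0 (inv h)) (at (locrep True True h 0))"
    using good_d0[OF ihD gi] good_Q0[OF g] by simp
  have "((\<lambda>w. locrep True True (inv h) (locrep True True h w)) has_derivative
        (\<lambda>v. D0 (inv h) (D0 h v))) (at 0)"
    by (rule has_derivative_compose[OF hQ hP])
  then have "((\<lambda>w. w) has_derivative (\<lambda>v. D0 (inv h) (D0 h v))) (at 0)" by (simp only: e)
  then have "(\<lambda>v. D0 (inv h) (D0 h v)) = (\<lambda>v. v)"
    using has_derivative_unique has_derivative_ident by blast
  then show ?thesis by (rule fun_cong)
qed

lemma D0_mul:
  assumes hD: "h \<in> Diff1_plus" and g: "good h" and nz: "\<alpha> \<noteq> 0" "\<beta> \<noteq> 0"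
  shows "D0 (mulmap \<alpha> \<circ> h \<circ> mulmap \<beta>) v = \<alpha> * D0 h (\<beta> * v)"
proof -
  have loc: "locrep True True (mulmap \<alpha> \<circ> h \<circ> mulmap \<beta>) = (\<lambda>w. \<alpha> * locrep True True h (\<beta> * w))"
  proof
    fix w show "locrep True True (mulmap \<alpha> \<circ> h \<circ> mulmap \<beta>) w = \<alpha> * locrep True True h (\<beta> * w)"
    proof -
      obtain u where u: "h (Some (\<beta> * w)) = Some u" using good_locTT[OF g, of "\<beta> * w"] by blast
      show ?thesis by (simp add: locrep_def u)
    qed
  qed
  have hQ: "(locrep True True h has_derivative D0 h) (at (\<beta> * 0))" using good_d0[OF hD g] by simp
  have hm: "((\<lambda>w. \<beta> * w) has_derivative (\<lambda>w. \<beta> * w)) (at 0)"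
    by (rule has_derivative_mult_right[OF has_derivative_ident])
  have "((\<lambda>w. \<alpha> * locrep True True h (\<beta> * w)) has_derivative (\<lambda>v. \<alpha> * D0 h (\<beta> * v))) (at 0)"
    by (rule has_derivative_mult_right[OF has_derivative_compose[OF hm hQ]])
  then have "D0 (mulmap \<alpha> \<circ> h \<circ> mulmap \<beta>) = (\<lambda>v. \<alpha> * D0 h (\<beta> * v))"
    unfolding D0_def loc by (rule frechet_derivative_at[symmetric])
  then show ?thesis by simp
qed


lemma LB:
  assumes L: "linear L" and j: "jdet L > 0"
  shows "\<exists>c>0. \<forall>w. c * norm w \<le> norm (L w)"
proof -
  define M where "M = norm (L 1) + norm (L \<i>) + 1"
  have M: "M > 0" unfolding M_def by (smt (verit) norm_ge_zero)
  have key: "norm w * jdet L \<le> M * norm (L w)" for w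
  proof -
    have Lw: "L w = of_real (Re w) * L 1 + of_real (Im w) * L \<i>" using lin_decomp[OF L] .
    have jd: "jdet L = Im (cnj (L 1) * L \<i>)" unfolding jdet_def by simp
    have e1: "Im (cnj (L 1) * L w) = Im w * jdet L"
      unfolding Lw jd by (simp add: algebra_simps)
    have e2: "Im (cnj (L w) * L \<i>) = Re w * jdet L"
      unfolding Lw jd by (simp add: algebra_simps)
    have "\<bar>Im w\<bar> * jdet L \<le> norm (L 1) * norm (L w)"
    proof -
      have "\<bar>Im w * jdet L\<bar> \<le> norm (cnj (L 1) * L w)" using e1 abs_Im_le_cmod by metis
      then show ?thesis using j by (simp add: abs_mult norm_mult)
    qed
    moreover have "\<bar>Re w\<bar> * jdet L \<le> norm (L \<i>) * norm (L w)"
    proof -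
      have "\<bar>Re w * jdet L\<bar> \<le> norm (cnj (L w) * L \<i>)" using e2 abs_Im_le_cmod by metis
      then show ?thesis using j by (simp add: abs_mult norm_mult mult.commute)
    qed
    moreover have "norm w \<le> \<bar>Re w\<bar> + \<bar>Im w\<bar>" by (rule cmod_le)
    moreover have "norm w * jdet L \<le> (\<bar>Re w\<bar> + \<bar>Im w\<bar>) * jdet L"
      using cmod_le j by (intro mult_right_mono) auto
    ultimately have "norm w * jdet L \<le> (norm (L 1) + norm (L \<i>)) * norm (L w)"
      by (simp add: distrib_right)
    also have "\<dots> \<le> M * norm (L w)" unfolding M_def by (simp add: mult_right_mono)
    finally show ?thesis .
  qed
  show ?thesis
  proof (intro exI[of _ "jdet L / M"] conjI allI)
    show "jdet L / M > 0" using j M by simp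
    fix w show "jdet L / M * norm w \<le> norm (L w)"
      using key[of w] M by (simp add: field_simps)
  qed
qed



lemma affine_of_conformal:
  assumes grp: "is_group_of_maps G" and sub: "G \<subseteq> Diff1_plus" and mob: "Mob \<subseteq> G"
    and conf: "\<And>h. h \<in> G2 G \<Longrightarrow> D0 h \<i> = \<i> * D0 h 1"
    and kG: "k \<in> G" and kN: "k None = None"
  shows "\<exists>\<alpha> \<beta>. \<alpha> \<noteq> 0 \<and> (\<forall>z. k (Some z) = Some (\<alpha> * z + \<beta>))"
proof -
  have kD: "k \<in> Diff1_plus" using kG sub by auto
  have bk: "bij k" using kD by (simp add: Diff1_plus_def)
  have kS: "k (Some z) \<noteq> None" for z
    using bk kN by (metis bij_def injD option.distinct(1))
  define F where "F = locrep True True k"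
  have kF: "k (Some z) = Some (F z)" for z
    using kS[of z] unfolding F_def locrep_def by (cases "k (Some z)") auto
  have rTT: "repdom True True k = UNIV"
    using kS unfolding repdom_def by (auto simp: cdom_True_iff)
  have dF: "F differentiable (at w)" for w
    using Diff1_plus_C1(2)[OF kD, of w True True] rTT F_def by simp
  have hasF: "(F has_derivative frechet_derivative F (at w)) (at w)" for w
    using dF frechet_derivative_works by blast
  have confF: "frechet_derivative F (at w) \<i> = \<i> * frechet_derivative F (at w) 1" for w
  proof -
    define u where "u = F w"
    define h where "h = transl (-u) \<circ> k \<circ> transl w"
    have grpc: "\<And>f g. f \<in> G \<Longrightarrow> g \<in> G \<Longrightarrow> f \<circ> g \<in> G" using grp by (simp add: is_group_of_maps_def)
    have hG: "h \<in> G" unfolding h_def using grpc transl_Mob mob kG by blast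
    have hloc: "locrep True True h = (\<lambda>z. F (z + w) + - u)"
      by (rule ext) (simp add: h_def locrep_def kF)
    have h2: "h \<in> G2 G" unfolding G2_def using hG by (simp add: h_def kF u_def kN)
    have hz: "((\<lambda>z. z + w) has_derivative (\<lambda>z. z)) (at 0)"
      by (rule has_derivative_add_const[OF has_derivative_ident])
    have hF0: "(F has_derivative frechet_derivative F (at w)) (at ((\<lambda>z. z + w) 0))"
      using hasF[of w] by simp
    have "((\<lambda>z. F (z + w) + - u) has_derivative frechet_derivative F (at w)) (at 0)"
      by (rule has_derivative_add_const[OF has_derivative_compose[OF hz hF0]])
    then have "D0 h = frechet_derivative F (at w)"
      unfolding D0_def hloc by (rule frechet_derivative_at[symmetric])
    then show ?thesis using conf[OF h2] by simp
  qed
  have holF: "F holomorphic_on UNIV"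
    unfolding holomorphic_on_def
  proof
    fix w :: complex
    define D where "D = frechet_derivative F (at w)"
    have lin: "linear D" unfolding D_def using dF linear_frechet_derivative by blast
    have "D = (\<lambda>v. D 1 * v)"
    proof
      fix v
      have "D v = of_real (Re v) * D 1 + of_real (Im v) * (\<i> * D 1)"
        using lin_decomp[OF lin, of v] confF[of w] by (simp add: D_def)
      also have "\<dots> = D 1 * (of_real (Re v) + \<i> * of_real (Im v))" by (simp add: algebra_simps)
      also have "\<dots> = D 1 * v" by (simp add: complex_eq[symmetric])
      finally show "D v = D 1 * v" .
    qed
    then have "(F has_field_derivative D 1) (at w)"
      unfolding has_field_derivative_def using hasF[of w] D_def by metis
    then show "F field_differentiable at w within UNIV"
      unfolding field_differentiable_def by auto
  qed
  define K' where "K' = locrep False False k"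
  have r0: "0 \<in> repdom False False k" unfolding repdom_def by (simp add: kN)
  have dK: "K' differentiable (at 0)" using Diff1_plus_C1(2)[OF kD r0] K'_def by simp
  define L where "L = frechet_derivative K' (at 0)"
  have hK: "(K' has_derivative L) (at 0)" unfolding L_def using dK frechet_derivative_works by blast
  have jL: "jdet L > 0" using kD r0 unfolding Diff1_plus_def L_def K'_def by blast
  have linL: "linear L" unfolding L_def using dK linear_frechet_derivative by blast
  obtain c where c: "c > 0" "\<And>w. c * norm w \<le> norm (L w)" using LB[OF linL jL] by blast
  obtain d where d: "d > 0" "\<And>y. norm (y - 0) < d \<Longrightarrow> norm (K' y - K' 0 - L (y - 0)) \<le> c/2 * norm (y - 0)"
    using hK c(1) unfolding has_derivative_at_alt by (meson half_gt_zero)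
  have K0: "K' 0 = 0" by (simp add: K'_def locrep_def kN)
  have Ky: "K' y = 1 / F (1 / y)" if "y \<noteq> 0" for y
    using that by (simp add: K'_def locrep_def kF)
  have nof: "norm (F z) \<le> (2 / c) * norm z ^ 1" if z: "2 / d \<le> norm z" for z
  proof -
    have zn: "z \<noteq> 0" using z d(1) by (auto simp: field_simps)
    define y where "y = 1 / z"
    have yn: "y \<noteq> 0" using zn y_def by simp
    have ny: "norm y = 1 / norm z" by (simp add: y_def norm_divide)
    have "norm y \<le> d / 2" using z d(1) zn unfolding ny by (simp add: field_simps)
    then have yd: "norm y < d" using d(1) by simp
    have e: "norm (K' y - L y) \<le> c/2 * norm y" using d(2)[of y] yd K0 by simp
    have "c * norm y \<le> norm (L y)" by (rule c(2))
    also have "\<dots> \<le> norm (K' y) + norm (K' y - L y)" using norm_triangle_ineq[of "K' y" "L y - K' y"] norm_minus_commute[of "K' y" "L y"] by simp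
    finally have "c/2 * norm y \<le> norm (K' y)" using e by simp
    moreover have "K' y = 1 / F z" using Ky[OF yn] by (simp add: y_def)
    ultimately have ineq: "c/2 * (1 / norm z) \<le> 1 / norm (F z)" by (simp add: ny norm_divide)
    have pos: "c/2 * (1 / norm z) > 0" using c(1) zn by simp
    then have Fz: "F z \<noteq> 0" using ineq by auto
    from ineq have "c/2 * norm (F z) \<le> norm z" using zn Fz by (simp add: field_simps)
    then show ?thesis using c(1) by (simp add: field_simps)
  qed
  have aff: "F \<xi> = F 0 + deriv F 0 * \<xi>" for \<xi>
    using Liouville_polynomial[OF holF nof, where \<xi>=\<xi>] by simp
  have dn: "deriv F 0 \<noteq> 0"
  proof
    assume "deriv F 0 = 0"
    then have "F 1 = F 0" using aff[of 1] by simp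
    then have "k (Some 1) = k (Some 0)" unfolding kF by simp
    then show False using bk by (metis bij_def injD option.inject zero_neq_one)
  qed
  have "\<forall>z. k (Some z) = Some (deriv F 0 * z + F 0)"
  proof
    fix z
    have "F z = deriv F 0 * z + F 0" using aff[of z] by (simp add: add.commute)
    then show "k (Some z) = Some (deriv F 0 * z + F 0)" using kF[of z] by simp
  qed
  then show ?thesis using dn by blast
qed



lemma affine_Mob:
  assumes "\<alpha> \<noteq> 0" "k None = None" "\<forall>z. k (Some z) = Some (\<alpha> * z + \<beta>)"
  shows "k \<in> Mob"
proof -
  define A where "A = csqrt \<alpha>"
  have A: "A \<noteq> 0" "A * A = \<alpha>" using assms(1) by (auto simp: A_def power2_eq_square[symmetric])
  have "k = mobius A (\<beta> / A) 0 (1 / A)"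
  proof
    fix x show "k x = mobius A (\<beta> / A) 0 (1 / A) x"
      using A assms(2,3) by (cases x) (auto simp: field_simps)
  qed
  moreover have "A * (1 / A) - \<beta> / A * 0 = 1" using A by simp
  ultimately show ?thesis using mobI by metis
qed

lemma conformal_Mob:
  assumes grp: "is_group_of_maps G" and sub: "G \<subseteq> Diff1_plus" and mob: "Mob \<subseteq> G"
    and conf: "\<And>h. h \<in> G2 G \<Longrightarrow> D0 h \<i> = \<i> * D0 h 1"
    and fG: "f \<in> G"
  shows "f \<in> Mob"
proof (cases "f None")
  case None
  then obtain \<alpha> \<beta> where "\<alpha> \<noteq> 0" "\<forall>z. f (Some z) = Some (\<alpha> * z + \<beta>)"
    using affine_of_conformal[OF grp sub mob conf fG] by blast
  then show ?thesis using affine_Mob None by blast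
next
  case (Some p)
  define m where "m = mobius 0 1 (-1) p"
  define m' where "m' = mobius p (-1) 1 0"
  have mM: "m \<in> Mob" unfolding m_def by (rule mobI) simp
  have kG: "m \<circ> f \<in> G" using grp mM mob fG by (auto simp: is_group_of_maps_def)
  have kN: "(m \<circ> f) None = None" using Some by (simp add: m_def)
  obtain \<alpha> \<beta> where ab: "\<alpha> \<noteq> 0" "\<forall>z. (m \<circ> f) (Some z) = Some (\<alpha> * z + \<beta>)"
    using affine_of_conformal[OF grp sub mob conf kG kN] by blast
  have mm: "m' (m x) = x" for x
  proof (cases x)
    case None then show ?thesis by (simp add: m_def m'_def)
  next
    case (Some z)
    show ?thesis
    proof (cases "z = p")
      case True then show ?thesis using Some by (simp add: m_def m'_def)
    next
      case False
      then have "p - z \<noteq> 0" by simp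
      then show ?thesis using Some False by (simp add: m_def m'_def field_simps)
    qed
  qed
  have fk: "f = m' \<circ> (m \<circ> f)" by (rule ext) (simp add: mm)
  define A where "A = csqrt \<alpha>"
  have A: "A \<noteq> 0" "A * A = \<alpha>" using ab(1) by (auto simp: A_def power2_eq_square[symmetric])
  define B where "B = \<beta> / A"
  have "f = mobius (p * A) (p * B - 1 / A) A B"
  proof
    fix x
    show "f x = mobius (p * A) (p * B - 1 / A) A B x"
    proof (cases x)
      case None
      then show ?thesis using Some A by simp
    next
      case (Some z)
      have e: "\<alpha> * z + \<beta> = A * (A * z + B)" using A by (simp add: B_def field_simps)
      have "f x = m' (Some (\<alpha> * z + \<beta>))" using fk ab(2) Some by (metis comp_apply)
      also have "\<dots> = mobius (p * A) (p * B - 1 / A) A B x"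
      proof (cases "A * z + B = 0")
        case True then show ?thesis using A Some unfolding e by (simp add: m'_def)
      next
        case False
        then have "A * (A * z + B) \<noteq> 0" using A by simp
        then show ?thesis using A Some False unfolding e by (simp add: m'_def field_simps)
      qed
      finally show ?thesis .
    qed
  qed
  moreover have "p * A * B - (p * B - 1 / A) * A = 1" using A by (simp add: field_simps)
  ultimately show ?thesis using mobI by metis
qed



lemma normalize:
  assumes lin: "linear A" and j: "jdet A > 0" and nc: "A \<i> \<noteq> \<i> * A 1"
  shows "\<exists>\<alpha> \<beta> a d. \<alpha> \<noteq> 0 \<and> \<beta> \<noteq> 0 \<and> 0 < a \<and> a < d
           \<and> \<alpha> * A (\<beta> * 1) = of_real a \<and> \<alpha> * A (\<beta> * \<i>) = \<i> * of_real d"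
proof -
  define p where "p = (A 1 - \<i> * A \<i>) / 2"
  define q where "q = (A 1 + \<i> * A \<i>) / 2"
  have Ax: "A x = p * x + q * cnj x" for x
  proof -
    have "A x = of_real (Re x) * A 1 + of_real (Im x) * A \<i>" using lin_decomp[OF lin] .
    also have "\<dots> = p * x + q * cnj x"
      unfolding p_def q_def by (simp add: complex_eq_iff field_simps)
    finally show ?thesis .
  qed
  have A1: "A 1 = p + q" using Ax[of 1] by simp
  have Ai: "A \<i> = \<i> * (p - q)" using Ax[of \<i>] by (simp add: algebra_simps)
  have qn: "q \<noteq> 0"
  proof
    assume "q = 0"
    then show False using nc A1 Ai by simp
  qed
  have jd: "jdet A = (Re p)^2 + (Im p)^2 - ((Re q)^2 + (Im q)^2)"
    unfolding jdet_def A1 Ai by (simp add: algebra_simps power2_eq_square)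
  define np where "np = cmod p"
  define nq where "nq = cmod q"
  have np2: "np^2 = (Re p)^2 + (Im p)^2" unfolding np_def by (simp add: cmod_power2)
  have nq2: "nq^2 = (Re q)^2 + (Im q)^2" unfolding nq_def by (simp add: cmod_power2)
  have nqp: "0 < nq" using qn nq_def by simp
  have npq: "nq < np"
  proof -
    have "nq^2 < np^2" using j jd np2 nq2 by simp
    then show ?thesis using nqp np_def by (smt (verit) norm_ge_zero power_mono)
  qed
  have pn: "p \<noteq> 0" using npq nqp np_def by auto
  define \<beta> where "\<beta> = csqrt (- q * cnj p)"
  define \<alpha> where "\<alpha> = cnj (\<beta> * p)"
  have h1: "\<beta> * \<beta> = - q * cnj p" unfolding \<beta>_def by (simp add: power2_eq_square[symmetric])
  have h2: "cnj \<beta> * cnj \<beta> = - cnj q * p"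
  proof -
    have "cnj (\<beta> * \<beta>) = cnj (- q * cnj p)" using h1 by simp
    then show ?thesis by simp
  qed
  have h3: "\<beta> * cnj \<beta> = of_real (np * nq)"
  proof -
    have "\<beta> * cnj \<beta> = of_real ((cmod \<beta>)^2)" using complex_norm_square[of \<beta>] by simp
    also have "(cmod \<beta>)^2 = cmod (\<beta> * \<beta>)" by (simp add: norm_mult power2_eq_square)
    also have "\<dots> = np * nq" unfolding h1 np_def nq_def by (simp add: norm_mult)
    finally show ?thesis .
  qed
  have h4: "p * cnj p = of_real (np^2)" unfolding np_def using complex_norm_square[of p] by simp
  have h5: "q * cnj q = of_real (nq^2)" unfolding nq_def using complex_norm_square[of q] by simp
  have bn: "\<beta> \<noteq> 0" using h1 qn pn by auto
  have an: "\<alpha> \<noteq> 0" using bn pn \<alpha>_def by simp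
  have e1: "\<alpha> * A (\<beta> * 1) = (\<beta> * cnj \<beta>) * (p * cnj p) + (cnj \<beta> * cnj \<beta>) * (cnj p * q)"
    unfolding Ax \<alpha>_def by (simp add: algebra_simps)
  have x: "(- cnj q * p) * (cnj p * q) = - (of_real (nq^2) * of_real (np^2))"
    unfolding h4[symmetric] h5[symmetric] by (simp add: algebra_simps)
  have e1': "\<alpha> * A (\<beta> * 1) = of_real (np^2 * nq * (np - nq))"
    unfolding e1 h2 h3 h4 x by (simp add: algebra_simps power2_eq_square)
  have e2: "\<alpha> * A (\<beta> * \<i>) = \<i> * ((\<beta> * cnj \<beta>) * (p * cnj p) - (cnj \<beta> * cnj \<beta>) * (cnj p * q))"
    unfolding Ax \<alpha>_def by (simp add: algebra_simps)
  have e2': "\<alpha> * A (\<beta> * \<i>) = \<i> * of_real (np^2 * nq * (np + nq))"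
    unfolding e2 h2 h3 h4 x by (simp add: algebra_simps power2_eq_square)
  have pos: "0 < np^2 * nq * (np - nq)" using npq nqp by simp
  have lt: "np^2 * nq * (np - nq) < np^2 * nq * (np + nq)" using npq nqp by simp
  show ?thesis using an bn pos lt e1' e2' by blast
qed



lemma good_lin: "h \<in> Diff1_plus \<Longrightarrow> good h \<Longrightarrow> linear (D0 h)"
  using good_d0 has_derivative_bounded_linear bounded_linear.linear by blast

theorem mainTheorem6:
  fixes G :: "(sphere \<Rightarrow> sphere) set"
  assumes "is_group_of_maps G" and "G \<subseteq> Diff1_plus" and "Mob \<subset> G"
  shows "\<exists>(lam::real) (g :: real \<Rightarrow> sphere \<Rightarrow> sphere).
           0 < lam \<and> lam < 1
         \<and> (\<forall>t\<in>{0..1}. g t \<in> G2 G) \<and> g 0 = id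
         \<and> C1_continuous_on {0..1} g
         \<and> (\<forall>t\<in>{0<..1}. \<exists>\<mu>::real. 0 < \<mu> \<and> \<mu> < 1
               \<and> D0 (g t) 1 = complex_of_real \<mu>
               \<and> (\<exists>v. v \<noteq> 0 \<and> D0 (g t) v = complex_of_real (1 / \<mu>) * v))
         \<and> D0 (g 1) 1 = complex_of_real lam
         \<and> D0 (g 1) \<i> = complex_of_real (1 / lam) * \<i>"
proof -
  note grp = assms(1) and sub = assms(2)
  have mob: "Mob \<subseteq> G" using assms(3) by auto
  have grpc: "\<And>f g. f \<in> G \<Longrightarrow> g \<in> G \<Longrightarrow> f \<circ> g \<in> G" using grp by (simp add: is_group_of_maps_def)
  have grpi: "\<And>g. g \<in> G \<Longrightarrow> inv g \<in> G" using grp by (simp add: is_group_of_maps_def)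
  have goodG2: "good f" if "f \<in> G2 G" for f
    using that sub unfolding G2_def good_def Diff1_plus_def by auto
  obtain h0 where h0G2: "h0 \<in> G2 G" and nc: "D0 h0 \<i> \<noteq> \<i> * D0 h0 1"
  proof -
    have "\<exists>h0\<in>G2 G. D0 h0 \<i> \<noteq> \<i> * D0 h0 1"
    proof (rule ccontr)
      assume "\<not> ?thesis"
      then have "\<And>h. h \<in> G2 G \<Longrightarrow> D0 h \<i> = \<i> * D0 h 1" by blast
      then have "G \<subseteq> Mob" using conformal_Mob[OF grp sub mob] by blast
      then show False using assms(3) by blast
    qed
    then show ?thesis using that by blast
  qed
  have h0G: "h0 \<in> G" using h0G2 by (simp add: G2_def)
  have h0D: "h0 \<in> Diff1_plus" using h0G sub by auto
  have g0: "good h0" using goodG2[OF h0G2] .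
  have lin0: "linear (D0 h0)" using good_lin[OF h0D g0] .
  have jd0: "jdet (D0 h0) > 0"
  proof -
    have "0 \<in> repdom True True h0" using good_repdom[OF g0] by (simp add: RD_def)
    then show ?thesis using h0D unfolding Diff1_plus_def D0_def by blast
  qed
  obtain \<alpha> \<beta> a d where ab: "\<alpha> \<noteq> 0" "\<beta> \<noteq> 0" "0 < a" "a < d"
    "\<alpha> * D0 h0 (\<beta> * 1) = of_real a" "\<alpha> * D0 h0 (\<beta> * \<i>) = \<i> * of_real d"
    using normalize[OF lin0 jd0 nc] by blast
  define h where "h = mulmap \<alpha> \<circ> h0 \<circ> mulmap \<beta>"
  have hG: "h \<in> G" unfolding h_def using grpc mulmap_Mob ab(1,2) mob h0G by (meson subsetD)
  have hD: "h \<in> Diff1_plus" using hG sub by auto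
  have gh: "good h" unfolding h_def using good_comp good_mulmap g0 ab(1,2) by metis
  have ihG: "inv h \<in> G" using grpi hG .
  have ihD: "inv h \<in> Diff1_plus" using ihG sub by auto
  have Dh: "D0 h v = \<alpha> * D0 h0 (\<beta> * v)" for v unfolding h_def using D0_mul[OF h0D g0 ab(1,2)] .
  have Dh1: "D0 h 1 = of_real a" using Dh[of 1] ab(5) by simp
  have Dhi: "D0 h \<i> = \<i> * of_real d" using Dh[of \<i>] ab(6) by simp
  have linh: "linear (D0 h)" using good_lin[OF hD gh] .
  have Dhx: "D0 h (Complex x y) = Complex (x * a) (y * d)" for x y
    using lin_decomp[OF linh, of "Complex x y"] Dh1 Dhi by (simp add: complex_eq_iff)
  have DI: "D0 (inv h) (D0 h v) = v" for v using D0_inv[OF hD ihD gh] .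
  define \<kappa> where "\<kappa> = a / d"
  have kp: "0 < \<kappa>" "\<kappa> < 1" using ab(3,4) by (auto simp: \<kappa>_def)
  have kd: "\<kappa> * d = a" using ab(3,4) by (simp add: \<kappa>_def)
  define \<theta> where "\<theta> t = t * pi / 2" for t :: real
  define wv where "wv t = Complex (cos (\<theta> t)) (\<kappa> * sin (\<theta> t))" for t
  define \<mu>f where "\<mu>f t = cmod (wv t)" for t
  have wvn: "wv t \<noteq> 0" for t
  proof
    assume "wv t = 0"
    then have "cos (\<theta> t) = 0" "sin (\<theta> t) = 0" using kp by (auto simp: wv_def complex_eq_iff)
    then show False using sin_cos_squared_add[of "\<theta> t"] by simp
  qed
  have \<mu>pos: "\<mu>f t > 0" for t using wvn by (simp add: \<mu>f_def)
  define \<gamma> where "\<gamma> t = cnj (wv t) / of_real (\<mu>f t)" for t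
  define \<rho> where "\<rho> t = cis (\<theta> t)" for t
  define g where "g t = mulmap (\<gamma> t) \<circ> inv h \<circ> mulmap (\<rho> t) \<circ> h" for t
  have \<gamma>n: "\<gamma> t \<noteq> 0" for t using wvn \<mu>pos[of t] by (simp add: \<gamma>_def)
  have \<rho>n: "\<rho> t \<noteq> 0" for t by (simp add: \<rho>_def)
  have cg: "continuous_on UNIV \<gamma>"
    unfolding \<gamma>_def \<mu>f_def wv_def \<theta>_def using wvn[unfolded wv_def \<theta>_def]
    by (intro continuous_intros) auto
  have cr: "continuous_on UNIV \<rho>"
    unfolding \<rho>_def \<theta>_def cis_conv_exp by (intro continuous_intros) auto
  have gG: "g t \<in> G2 G" for t
  proof -
    have "g t \<in> G" unfolding g_def using grpc mulmap_Mob \<gamma>n \<rho>n mob ihG hG by (meson subsetD)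
    moreover have "good (g t)" unfolding g_def
      using good_comp good_mulmap good_inv[OF gh] gh \<gamma>n \<rho>n by metis
    ultimately show ?thesis unfolding G2_def good_def by simp
  qed
  have Dg: "D0 (g t) v = \<gamma> t * D0 (inv h) (\<rho> t * D0 h v)" for t v
    unfolding g_def using D0_path[OF hD ihD gh \<gamma>n \<rho>n] .
  have Dg1: "D0 (g t) 1 = of_real (\<mu>f t)" for t
  proof -
    have "\<rho> t * D0 h 1 = D0 h (wv t)"
      unfolding Dh1 Dhx wv_def \<rho>_def using kd by (simp add: complex_eq_iff cis.code)
    then have "D0 (g t) 1 = \<gamma> t * wv t" using Dg DI by simp
    also have "\<dots> = of_real (\<mu>f t)"
    proof -
      have "cnj (wv t) * wv t = of_real ((\<mu>f t)^2)"
        unfolding \<mu>f_def using complex_norm_square[of "wv t"] by (simp add: mult.commute)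
      then show ?thesis unfolding \<gamma>_def using \<mu>pos[of t]
        by (simp add: field_simps power2_eq_square)
    qed
    finally show ?thesis .
  qed
  have Dgi: "D0 (g t) \<i> = Complex (cos (\<theta> t) * sin (\<theta> t) * (\<kappa> - 1 / \<kappa>)) 1 / of_real (\<mu>f t)" for t
  proof -
    have "\<rho> t * D0 h \<i> = D0 h (Complex (- sin (\<theta> t) / \<kappa>) (cos (\<theta> t)))"
      unfolding Dhi Dhx \<rho>_def using kd kp by (simp add: complex_eq_iff cis.code field_simps)
    then have "D0 (g t) \<i> = \<gamma> t * Complex (- sin (\<theta> t) / \<kappa>) (cos (\<theta> t))" using Dg DI by simp
    also have "\<dots> = Complex (cos (\<theta> t) * sin (\<theta> t) * (\<kappa> - 1 / \<kappa>)) 1 / of_real (\<mu>f t)"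
    proof -
      have "cnj (wv t) * Complex (- sin (\<theta> t) / \<kappa>) (cos (\<theta> t))
            = Complex (cos (\<theta> t) * sin (\<theta> t) * (\<kappa> - 1 / \<kappa>)) 1"
        unfolding wv_def using kp sin_cos_squared_add[of "\<theta> t"]
        by (simp add: complex_eq_iff field_simps power2_eq_square)
      then show ?thesis unfolding \<gamma>_def by (simp add: field_simps)
    qed
    finally show ?thesis .
  qed
  have g0id: "g 0 = id"
  proof -
    have c1: "Complex 1 0 = 1" by (simp add: complex_eq_iff)
    have "\<gamma> 0 = 1" "\<rho> 0 = 1" by (simp_all add: \<gamma>_def \<mu>f_def wv_def \<theta>_def \<rho>_def c1)
    moreover have "inv h \<circ> h = id" using gh by (simp add: good_def bij_def)
    ultimately show ?thesis by (simp add: g_def comp_assoc)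
  qed
  have C1: "C1_continuous_on {0..1} g"
    unfolding g_def using path_C1[OF hD ihD gh cg cr \<gamma>n \<rho>n] .
  have eig: "\<exists>\<mu>::real. 0 < \<mu> \<and> \<mu> < 1 \<and> D0 (g t) 1 = complex_of_real \<mu>
               \<and> (\<exists>v. v \<noteq> 0 \<and> D0 (g t) v = complex_of_real (1 / \<mu>) * v)" if t: "t \<in> {0<..1}" for t
  proof -
    define c where "c = cos (\<theta> t)"
    define s where "s = sin (\<theta> t)"
    define \<mu> where "\<mu> = \<mu>f t"
    have sp: "s > 0" unfolding s_def \<theta>_def using t by (intro sin_gt_zero) auto
    have cs: "c^2 + s^2 = 1" unfolding c_def s_def by simp
    have m2: "\<mu>^2 = c^2 + \<kappa>^2 * s^2"
      unfolding \<mu>_def \<mu>f_def wv_def c_def s_def by (simp add: cmod_power2 power_mult_distrib)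
    have k2: "\<kappa>^2 < 1" using kp by (simp add: power_less_one_iff)
    have "\<kappa>^2 * s^2 < s^2" using k2 sp by simp
    then have "\<mu>^2 < 1" using m2 cs by simp
    moreover have mp: "\<mu> > 0" unfolding \<mu>_def by (rule \<mu>pos)
    ultimately have m1: "\<mu> < 1" by (smt (verit) one_le_power)
    define v where "v = Complex (c * s * (\<kappa> - 1 / \<kappa>)) (1 - \<mu>^2)"
    have vn: "v \<noteq> 0" using \<open>\<mu>^2 < 1\<close> by (simp add: v_def complex_eq_iff)
    have lg: "linear (D0 (g t))" using good_lin gG[of t] goodG2 sub by (simp add: G2_def subset_iff)
    have "D0 (g t) v = of_real (Re v) * D0 (g t) 1 + of_real (Im v) * D0 (g t) \<i>"
      by (rule lin_decomp[OF lg])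
    also have "\<dots> = complex_of_real (1 / \<mu>) * v"
      unfolding Dg1 Dgi v_def \<mu>_def[symmetric] c_def[symmetric] s_def[symmetric]
      using mp by (simp add: complex_eq_iff field_simps power2_eq_square)
    finally show ?thesis using mp m1 vn Dg1[of t] \<mu>_def by blast
  qed
  have t1: "\<theta> 1 = pi / 2" by (simp add: \<theta>_def)
  have mu1: "\<mu>f 1 = \<kappa>" unfolding \<mu>f_def wv_def t1 using kp by (simp add: cmod_def)
  have fin1: "D0 (g 1) 1 = complex_of_real \<kappa>" using Dg1[of 1] mu1 by simp
  have fin2: "D0 (g 1) \<i> = complex_of_real (1 / \<kappa>) * \<i>"
    using Dgi[of 1] mu1 t1 by (simp add: complex_eq_iff)
  show ?thesis
    using kp gG g0id C1 eig fin1 fin2 by blast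
qed

end
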